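(* For the hypergeometric weights described in the context, \[ (\vartheta H)H^{-1}=\alpha,\qquad -\phi=(\Lambda^\top)^2\gamma+\Lambda^\top\beta,\qquad -\tilde\phi=\Lambda^\top(\mathfrak a_-H)H^{-1}. \]
   Context: Weights on $\mathbb N_0$: $w^{(a)}(k)=\frac{(b^{(a)}_1)_k\cdots(b^{(a)}_{M^{(a)}})_k}{(c_1)_k\cdots(c_N)_k}\frac{(\eta^{(a)})^k}{k!}$, $a\in\{1,2\}$, convergent series. Moment matrix (indices from 0): $\mathscr M_{n,2m}=\sum_k k^{n+m}w^{(1)}(k)$, $\mathscr M_{n,2m+1}=\sum_k k^{n+m}w^{(2)}(k)$, with all leading principal minors nonzero, so $\mathscr M=S^{-1}H\tilde S^{-\top}$ ($S,\tilde S$ lower unitriangular, $H=\operatorname{diag}(H_0,H_1,\dots)$), depending on $(\eta^{(1)},\eta^{(2)})$. $\Lambda$ has ones on the first superdiagonal; $S\Lambda S^{-1}=(\Lambda^\top)^2\gamma+\Lambda^\top\beta+\alpha+\Lambda$ with diagonal $\alpha,\beta,\gamma$. $\vartheta^{(a)}=\eta^{(a)}\partial/\partial\eta^{(a)}$, $\vartheta=\vartheta^{(1)}+\vartheta^{(2)}$, $\phi=(\vartheta S)S^{-1}$, $\tilde\phi=(\vartheta\tilde S)\tilde S^{-1}$. $\mathfrak a_-\operatorname{diag}(m_0,m_1,\dots)=\operatorname{diag}(m_1,m_2,\dots)$. *)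

theory Defs
  imports "HOL-Analysis.Analysis"
begin

type_synonym imat = "nat \<Rightarrow> nat \<Rightarrow> real"

text \<open>Product of infinite matrices, for row-finite left factors (every product in the
statement has a row-finite left factor: lower triangular, banded or diagonal).\<close>
definition mmul :: "imat \<Rightarrow> imat \<Rightarrow> imat" where
  "mmul A B = (\<lambda>i j. \<Sum>k\<in>{k. A i k \<noteq> 0}. A i k * B k j)"

definition madd :: "imat \<Rightarrow> imat \<Rightarrow> imat" where
  "madd A B = (\<lambda>i j. A i j + B i j)"

definition mneg :: "imat \<Rightarrow> imat" where
  "mneg A = (\<lambda>i j. - A i j)"

definition mtrans :: "imat \<Rightarrow> imat" where
  "mtrans A = (\<lambda>i j. A j i)"

definition diagm :: "(nat \<Rightarrow> real) \<Rightarrow> imat" where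
  "diagm d = (\<lambda>i j. if i = j then d i else 0)"

definition idm :: imat where
  "idm = diagm (\<lambda>_. 1)"

definition Lam :: imat where
  "Lam = (\<lambda>i j. if j = Suc i then 1 else 0)"

definition LamT :: imat where
  "LamT = mtrans Lam"

definition lower_unitri :: "imat \<Rightarrow> bool" where
  "lower_unitri A \<longleftrightarrow> (\<forall>i j. i < j \<longrightarrow> A i j = 0) \<and> (\<forall>i. A i i = 1)"

text \<open>Inverse of a lower unitriangular matrix (in the algebra of lower triangular matrices).\<close>
definition lt_inv :: "imat \<Rightarrow> imat" where
  "lt_inv A = (THE B. lower_unitri B \<and> mmul A B = idm)"

definition lead_minor :: "imat \<Rightarrow> nat \<Rightarrow> real" where
  "lead_minor A n = (\<Sum>p | p permutes {..<n}. of_int (sign p) * (\<Prod>i<n. A i (p i)))"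

definition hgw :: "real list \<Rightarrow> real list \<Rightarrow> real \<Rightarrow> nat \<Rightarrow> real" where
  "hgw b c eta k = (\<Prod>x\<leftarrow>b. pochhammer x k) / (\<Prod>x\<leftarrow>c. pochhammer x k) * eta ^ k / fact k"

definition moment :: "real list \<Rightarrow> real list \<Rightarrow> real list \<Rightarrow> real \<times> real \<Rightarrow> imat" where
  "moment b1 b2 c p = (\<lambda>n j. if even j
      then (\<Sum>k. real k ^ (n + j div 2) * hgw b1 c (fst p) k)
      else (\<Sum>k. real k ^ (n + j div 2) * hgw b2 c (snd p) k))"

definition theta :: "(real \<times> real \<Rightarrow> real) \<Rightarrow> real \<times> real \<Rightarrow> real" where
  "theta g p = fst p * deriv (\<lambda>t. g (t, snd p)) (fst p) + snd p * deriv (\<lambda>t. g (fst p, t)) (snd p)"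

definition mtheta :: "(real \<times> real \<Rightarrow> imat) \<Rightarrow> real \<times> real \<Rightarrow> imat" where
  "mtheta A p = (\<lambda>i j. theta (\<lambda>q. A q i j) p)"

definition phi :: "(real \<times> real \<Rightarrow> imat) \<Rightarrow> real \<times> real \<Rightarrow> imat" where
  "phi S p = mmul (mtheta S p) (lt_inv (S p))"

end

theory Submission
  imports Defs "Jordan_Normal_Form.Determinant"
begin


lemma mmul_fin:
  assumes "\<forall>k>N. A i k = 0"
  shows "mmul A B i j = (\<Sum>k\<le>N. A i k * B k j)"
proof -
  have "mmul A B i j = (\<Sum>k\<in>{k. A i k \<noteq> 0}. A i k * B k j)" by (simp add: mmul_def)
  also have "\<dots> = (\<Sum>k\<le>N. A i k * B k j)"
  proof (rule sum.mono_neutral_left)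
    show "finite {..N}" by simp
    show "{k. A i k \<noteq> 0} \<subseteq> {..N}" using assms by (auto simp: not_less[symmetric])
    show "\<forall>k\<in>{..N} - {k. A i k \<noteq> 0}. A i k * B k j = 0" by auto
  qed
  finally show ?thesis .
qed

lemma lu_zero: "lower_unitri A \<Longrightarrow> i < k \<Longrightarrow> A i k = 0"
  by (simp add: lower_unitri_def)

lemma lu_one: "lower_unitri A \<Longrightarrow> A i i = 1"
  by (simp add: lower_unitri_def)

lemma mmul_lu: "lower_unitri A \<Longrightarrow> mmul A B i j = (\<Sum>k\<le>i. A i k * B k j)"
  by (rule mmul_fin) (simp add: lu_zero)

lemma mmul_lu_split: "lower_unitri A \<Longrightarrow> mmul A B i j = B i j + (\<Sum>k<i. A i k * B k j)"
  by (simp add: mmul_lu lessThan_Suc_atMost[symmetric] lu_one)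

function linv :: "imat \<Rightarrow> nat \<Rightarrow> nat \<Rightarrow> real" where
  "linv A i j = (if i < j then 0 else if i = j then 1 else - (\<Sum>k\<in>{j..<i}. A i k * linv A k j))"
  by auto
termination by (relation "Wellfounded.measure (\<lambda>(A,i,j). i)") auto

declare linv.simps[simp del]

lemma linv_lu: "lower_unitri (linv A)"
  unfolding lower_unitri_def by (auto simp: linv.simps)

lemma linv_right:
  assumes A: "lower_unitri A"
  shows "mmul A (linv A) = idm"
proof (intro ext)
  fix i j
  have e: "mmul A (linv A) i j = linv A i j + (\<Sum>k<i. A i k * linv A k j)"
    by (rule mmul_lu_split[OF A])
  show "mmul A (linv A) i j = idm i j"
  proof (cases "i < j")
    case True
    then show ?thesis unfolding e by (simp add: linv.simps idm_def diagm_def)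
  next
    case False
    note F = False
    show ?thesis
    proof (cases "i = j")
      case True
      have "(\<Sum>k<i. A i k * linv A k j) = 0"
        by (rule sum.neutral) (auto simp: linv.simps True)
      then show ?thesis unfolding e using True by (simp add: linv.simps idm_def diagm_def)
    next
      case False
      have s: "(\<Sum>k<i. A i k * linv A k j) = (\<Sum>k\<in>{j..<i}. A i k * linv A k j)"
        by (rule sum.mono_neutral_right) (auto simp: linv.simps)
      have "linv A i j = - (\<Sum>k\<in>{j..<i}. A i k * linv A k j)"
        using F False by (subst linv.simps) simp
      then show ?thesis unfolding e s using F False by (simp add: idm_def diagm_def)
    qed
  qed
qed

lemma right_inv_unique:
  assumes A: "lower_unitri A" and 1: "mmul A B1 = idm" and 2: "mmul A B2 = idm"
  shows "B1 = B2"
proof -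
  have "\<forall>j. B1 i j = B2 i j" for i
  proof (induction i rule: less_induct)
    case (less i)
    show ?case
    proof
      fix j
      have "mmul A B1 i j = mmul A B2 i j" using 1 2 by simp
      moreover have "(\<Sum>k<i. A i k * B1 k j) = (\<Sum>k<i. A i k * B2 k j)"
        using less by (intro sum.cong) auto
      ultimately show "B1 i j = B2 i j" by (simp add: mmul_lu_split[OF A])
    qed
  qed
  then show ?thesis by (auto intro!: ext)
qed

lemma lt_inv_prop:
  assumes A: "lower_unitri A"
  shows "lower_unitri (lt_inv A) \<and> mmul A (lt_inv A) = idm"
  unfolding lt_inv_def
proof (rule theI[of _ "linv A"])
  show "lower_unitri (linv A) \<and> mmul A (linv A) = idm" using linv_lu linv_right[OF A] by simp
  fix B assume "lower_unitri B \<and> mmul A B = idm"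
  then show "B = linv A" using right_inv_unique[OF A] linv_right[OF A] by blast
qed



lemma delta_sum: "finite A \<Longrightarrow> (\<Sum>k\<in>A. (if a = k then 1 else 0) * f k) = (if a \<in> A then f a else (0::real))"
proof -
  assume "finite A"
  have "(\<Sum>k\<in>A. (if a = k then 1 else 0) * f k) = (\<Sum>k\<in>A. (if a = k then f k else 0))"
    by (intro sum.cong) auto
  then show ?thesis using \<open>finite A\<close> by (simp add: sum.delta)
qed

lemma idm_sum_l: "n \<le> N \<Longrightarrow> (\<Sum>k\<le>N. idm n k * f k) = (f n :: real)"
  unfolding idm_def diagm_def by (subst delta_sum) auto

lemma idm_sum_r: "n \<le> N \<Longrightarrow> (\<Sum>k\<le>N. f k * idm n k) = (f n :: real)"
  using idm_sum_l[of n N f] by (simp add: mult.commute)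

lemma mmul_diag_right:
  assumes "\<forall>k>N. A i k = 0"
  shows "mmul A (diagm d) i j = A i j * d j"
proof -
  have "mmul A (diagm d) i j = (\<Sum>k\<le>N. A i k * diagm d k j)" by (rule mmul_fin) (rule assms)
  also have "\<dots> = (\<Sum>k\<in>{j}\<inter>{..N}. A i k * d j)"
    by (rule sum.mono_neutral_cong_right) (auto simp: diagm_def)
  also have "\<dots> = A i j * d j" using assms by (cases "j \<le> N") auto
  finally show ?thesis .
qed

lemma diag_row: "\<forall>k>i. diagm d i k = 0" by (simp add: diagm_def)
lemma LamT_entry: "LamT i j = (if i = Suc j then 1 else 0)" by (simp add: LamT_def mtrans_def Lam_def)
lemma LamT_row: "\<forall>k>i. LamT i k = 0" by (simp add: LamT_entry)

lemma mmul_LamT_left: "mmul LamT X i j = (if i = 0 then 0 else X (i - 1) j)"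
proof -
  have "mmul LamT X i j = (\<Sum>k\<le>i. LamT i k * X k j)" by (rule mmul_fin) (rule LamT_row)
  then show ?thesis by (cases i) (simp_all add: LamT_entry delta_sum)
qed

lemma LamT2_entry: "mmul LamT LamT i j = (if i = Suc (Suc j) then 1 else 0)"
  by (auto simp: mmul_LamT_left LamT_entry)

lemma LamT2_row: "\<forall>k>i. mmul LamT LamT i k = 0" by (simp add: LamT2_entry)

lemma diag_diag: "mmul (diagm a) (diagm b) = diagm (\<lambda>i. a i * b i)"
proof (intro ext)
  fix i j
  have "mmul (diagm a) (diagm b) i j = diagm a i j * b j"
    by (rule mmul_diag_right[where N=i]) (rule diag_row)
  then show "mmul (diagm a) (diagm b) i j = diagm (\<lambda>i. a i * b i) i j" by (simp add: diagm_def)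
qed

lemma SLam_entry:
  assumes s: "lower_unitri s"
  shows "mmul (mmul s Lam) l n m = (\<Sum>a\<le>n. s n a * l (Suc a) m)"
proof -
  have e: "mmul s Lam n c = (if c = 0 then 0 else if c \<le> Suc n then s n (c - 1) else 0)" for c
  proof -
    have "mmul s Lam n c = (\<Sum>k\<le>n. s n k * Lam k c)" by (rule mmul_lu[OF s])
    also have "\<dots> = (\<Sum>k\<in>{c - 1}\<inter>{k. c \<noteq> 0 \<and> k \<le> n}. s n k)"
      by (rule sum.mono_neutral_cong_right) (auto simp: Lam_def)
    also have "\<dots> = (if c = 0 then 0 else if c \<le> Suc n then s n (c - 1) else 0)"
      by (cases c) auto
    finally show ?thesis .
  qed
  have "mmul (mmul s Lam) l n m = (\<Sum>c\<le>Suc n. mmul s Lam n c * l c m)"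
    by (rule mmul_fin) (simp add: e)
  also have "\<dots> = (\<Sum>a\<le>n. s n a * l (Suc a) m)"
    by (subst sum.atMost_Suc_shift) (simp add: e)
  finally show ?thesis .
qed

lemma lower_left_inv_formula:
  assumes A: "lower_unitri A" and B: "lower_unitri B" and AB: "mmul A B = idm" and ji: "j < i"
  shows "A i j = - (\<Sum>k\<in>{j<..i}. A i k * B k j)"
proof -
  have "0 = mmul A B i j" using AB ji by (simp add: idm_def diagm_def)
  also have "\<dots> = (\<Sum>k\<le>i. A i k * B k j)" by (rule mmul_lu[OF A])
  also have "\<dots> = (\<Sum>k\<in>{j..i}. A i k * B k j)"
    by (rule sum.mono_neutral_right) (auto simp: lu_zero[OF B])
  also have "\<dots> = A i j + (\<Sum>k\<in>{j<..i}. A i k * B k j)"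
    using ji by (subst sum.atLeast_Suc_atMost) (auto simp: lu_one[OF B] atLeastSucAtMost_greaterThanAtMost)
  finally show ?thesis by linarith
qed

lemma LDU_entry:
  assumes L: "lower_unitri L" and M: "M = mmul (mmul L (diagm h)) (mtrans U)"
  and N: "min i j \<le> N" and U: "lower_unitri U"
  shows "M i j = (\<Sum>k\<le>N. L i k * h k * U j k)"
proof -
  have LD: "mmul L (diagm h) i k = L i k * h k" for i k
    by (rule mmul_diag_right[where N=i]) (simp add: lu_zero[OF L])
  have "M i j = (\<Sum>k\<le>i. L i k * h k * U j k)"
    unfolding M by (subst mmul_fin[of i]) (auto simp: LD lu_zero[OF L] mtrans_def)
  also have "\<dots> = (\<Sum>k\<le>N. L i k * h k * U j k)"
  proof -
    have "(\<Sum>k\<le>i. L i k * h k * U j k) = (\<Sum>k\<le>min i j. L i k * h k * U j k)"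
      by (rule sum.mono_neutral_right) (auto simp: lu_zero[OF L] lu_zero[OF U])
    also have "\<dots> = (\<Sum>k\<le>N. L i k * h k * U j k)"
      using N by (intro sum.mono_neutral_left) (auto simp: lu_zero[OF L] lu_zero[OF U])
    finally show ?thesis .
  qed
  finally show ?thesis .
qed

lemma LDU_rec:
  assumes L: "lower_unitri L" and U: "lower_unitri U" and M: "M = mmul (mmul L (diagm h)) (mtrans U)"
  and ni: "n \<le> i"
  shows "M i n = L i n * h n + (\<Sum>k<n. L i k * h k * U n k)"
    and "M n i = h n * U i n + (\<Sum>k<n. L n k * h k * U i k)"
proof -
  show "M i n = L i n * h n + (\<Sum>k<n. L i k * h k * U n k)"
    using LDU_entry[OF L M _ U, of i n n] ni
    by (simp add: lessThan_Suc_atMost[symmetric] lu_one[OF U])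
  show "M n i = h n * U i n + (\<Sum>k<n. L n k * h k * U i k)"
    using LDU_entry[OF L M _ U, of n i n] ni
    by (simp add: lessThan_Suc_atMost[symmetric] lu_one[OF L])
qed

lemma P1:
  assumes L: "lower_unitri l" and U: "lower_unitri u" and st: "lower_unitri st"
    and M: "M = mmul (mmul l (diagm h)) (mtrans u)" and su: "mmul st u = idm"
  shows "(\<Sum>b\<le>m. M a b * st m b) = l a m * h m"
proof -
  have "(\<Sum>b\<le>m. M a b * st m b) = (\<Sum>b\<le>m. \<Sum>k\<le>a+m. l a k * h k * u b k * st m b)"
    by (intro sum.cong refl) (simp add: LDU_entry[OF L M _ U, of a _ "a+m"] sum_distrib_right)
  also have "\<dots> = (\<Sum>k\<le>a+m. l a k * h k * (\<Sum>b\<le>m. st m b * u b k))"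
    by (subst sum.swap) (simp add: sum_distrib_left mult_ac)
  also have "\<dots> = (\<Sum>k\<le>a+m. l a k * h k * idm m k)"
    using su by (simp add: mmul_lu[OF st, symmetric])
  also have "\<dots> = l a m * h m"
    by (rule idm_sum_r) simp
  finally show ?thesis .
qed

lemma P2:
  assumes L: "lower_unitri l" and U: "lower_unitri u" and s: "lower_unitri s"
    and M: "M = mmul (mmul l (diagm h)) (mtrans u)" and sl: "mmul s l = idm"
  shows "(\<Sum>a\<le>n. s n a * M a b) = h n * u b n"
proof -
  have "(\<Sum>a\<le>n. s n a * M a b) = (\<Sum>a\<le>n. \<Sum>k\<le>n+b. s n a * (l a k * h k * u b k))"
    by (intro sum.cong refl) (simp add: LDU_entry[OF L M _ U, of _ b "n+b"] sum_distrib_left)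
  also have "\<dots> = (\<Sum>k\<le>n+b. (\<Sum>a\<le>n. s n a * l a k) * h k * u b k)"
    by (subst sum.swap) (simp add: sum_distrib_right mult.assoc)
  also have "\<dots> = (\<Sum>k\<le>n+b. idm n k * h k * u b k)"
    using sl by (simp add: mmul_lu[OF s, symmetric])
  also have "\<dots> = h n * u b n"
    by (simp only: mult.assoc, rule idm_sum_l) simp
  finally show ?thesis .
qed



lemma final_algebra:
  fixes s l st u M dS dSt :: imat and h dH \<alpha> \<beta> \<gamma> :: "nat \<Rightarrow> real"
  assumes s: "lower_unitri s" and l: "lower_unitri l" and st: "lower_unitri st" and u: "lower_unitri u"
    and sl: "mmul s l = idm" and su: "mmul st u = idm"
    and M: "M = mmul (mmul l (diagm h)) (mtrans u)"
    and hnz: "\<forall>k. h k \<noteq> 0"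
    and dS0: "\<forall>n a. n \<le> a \<longrightarrow> dS n a = 0" and dSt0: "\<forall>m b. m \<le> b \<longrightarrow> dSt m b = 0"
    and K: "\<forall>n m. dH n * idm n m = (\<Sum>a\<le>n. \<Sum>b\<le>m. dS n a * M a b * st m b
              + s n a * M (Suc a) b * st m b + s n a * M a b * dSt m b)"
    and E: "mmul (mmul s Lam) l =
           madd (madd (madd (mmul (mmul LamT LamT) (diagm \<gamma>)) (mmul LamT (diagm \<beta>)))
                      (diagm \<alpha>)) Lam"
  shows "mmul (diagm dH) (diagm (\<lambda>i. inverse (h i))) = diagm \<alpha>
   \<and> mneg (mmul dS l) = madd (mmul (mmul LamT LamT) (diagm \<gamma>)) (mmul LamT (diagm \<beta>))
   \<and> mneg (mmul dSt u) = mmul LamT (mmul (diagm (\<lambda>i. h (Suc i))) (diagm (\<lambda>i. inverse (h i))))"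
proof -
  define phi where "phi = mmul dS l"
  define psi where "psi = mmul dSt u"
  define Ent where "Ent = mmul (mmul s Lam) l"
  have phi_e: "phi n m = (\<Sum>a\<le>n. dS n a * l a m)" for n m
    unfolding phi_def by (rule mmul_fin) (use dS0 in auto)
  have psi_e: "psi m n = (\<Sum>b\<le>m. dSt m b * u b n)" for n m
    unfolding psi_def by (rule mmul_fin) (use dSt0 in auto)
  have phi0: "phi n m = 0" if "n \<le> m" for n m
    unfolding phi_e
  proof (intro sum.neutral ballI)
    fix a assume "a \<in> {..n}"
    then show "dS n a * l a m = 0" using that dS0 lu_zero[OF l, of a m]
      by (cases "a < m") auto
  qed
  have psi0: "psi m n = 0" if "m \<le> n" for n m
    unfolding psi_e
  proof (intro sum.neutral ballI)
    fix b assume "b \<in> {..m}"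
    then show "dSt m b * u b n = 0" using that dSt0 lu_zero[OF u, of b n]
      by (cases "b < n") auto
  qed
  have Ent_e: "Ent n m = (if n = Suc (Suc m) then \<gamma> m else 0) + (if n = Suc m then \<beta> m else 0)
      + (if n = m then \<alpha> m else 0) + (if m = Suc n then 1 else 0)" for n m
  proof -
    have a: "mmul (mmul LamT LamT) (diagm \<gamma>) n m = mmul LamT LamT n m * \<gamma> m"
      by (rule mmul_diag_right[where N=n]) (rule LamT2_row)
    have b: "mmul LamT (diagm \<beta>) n m = LamT n m * \<beta> m"
      by (rule mmul_diag_right[where N=n]) (rule LamT_row)
    show ?thesis unfolding Ent_def E madd_def a b
      by (simp add: LamT2_entry LamT_entry diagm_def Lam_def)
  qed
  have Kx: "dH n * idm n m = phi n m * h m + Ent n m * h m + h n * psi m n" for n m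
  proof -
    have T1: "(\<Sum>a\<le>n. \<Sum>b\<le>m. dS n a * M a b * st m b) = phi n m * h m"
    proof -
      have "(\<Sum>a\<le>n. \<Sum>b\<le>m. dS n a * M a b * st m b) = (\<Sum>a\<le>n. dS n a * (\<Sum>b\<le>m. M a b * st m b))"
        by (simp add: sum_distrib_left mult.assoc)
      also have "\<dots> = (\<Sum>a\<le>n. dS n a * (l a m * h m))"
        by (simp add: P1[OF l u st M su])
      also have "\<dots> = phi n m * h m" by (simp add: phi_e sum_distrib_right mult.assoc)
      finally show ?thesis .
    qed
    have T2: "(\<Sum>a\<le>n. \<Sum>b\<le>m. s n a * M (Suc a) b * st m b) = Ent n m * h m"
    proof -
      have "(\<Sum>a\<le>n. \<Sum>b\<le>m. s n a * M (Suc a) b * st m b) = (\<Sum>a\<le>n. s n a * (\<Sum>b\<le>m. M (Suc a) b * st m b))"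
        by (simp add: sum_distrib_left mult.assoc)
      also have "\<dots> = (\<Sum>a\<le>n. s n a * (l (Suc a) m * h m))"
        by (simp add: P1[OF l u st M su])
      also have "\<dots> = Ent n m * h m" by (simp add: Ent_def SLam_entry[OF s] sum_distrib_right mult.assoc)
      finally show ?thesis .
    qed
    have T3: "(\<Sum>a\<le>n. \<Sum>b\<le>m. s n a * M a b * dSt m b) = h n * psi m n"
    proof -
      have "(\<Sum>a\<le>n. \<Sum>b\<le>m. s n a * M a b * dSt m b) = (\<Sum>b\<le>m. (\<Sum>a\<le>n. s n a * M a b) * dSt m b)"
        by (subst sum.swap) (simp add: sum_distrib_right)
      also have "\<dots> = (\<Sum>b\<le>m. h n * u b n * dSt m b)"
        by (simp add: P2[OF l u s M sl])
      also have "\<dots> = h n * psi m n" by (simp add: psi_e sum_distrib_left mult_ac)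
      finally show ?thesis .
    qed
    show ?thesis using K T1 T2 T3 by (simp add: sum.distrib)
  qed
  have G1: "mmul (diagm dH) (diagm (\<lambda>i. inverse (h i))) = diagm \<alpha>"
  proof -
    have "dH i * inverse (h i) = \<alpha> i" for i
    proof -
      have "dH i = \<alpha> i * h i" using Kx[of i i] phi0[of i i] psi0[of i i]
        by (simp add: Ent_e idm_def diagm_def)
      then show ?thesis using hnz by simp
    qed
    then show ?thesis by (simp add: diag_diag)
  qed
  have G2: "mneg phi = madd (mmul (mmul LamT LamT) (diagm \<gamma>)) (mmul LamT (diagm \<beta>))"
  proof (intro ext)
    fix n m
    have a: "mmul (mmul LamT LamT) (diagm \<gamma>) n m = mmul LamT LamT n m * \<gamma> m"
      by (rule mmul_diag_right[where N=n]) (rule LamT2_row)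
    have b: "mmul LamT (diagm \<beta>) n m = LamT n m * \<beta> m"
      by (rule mmul_diag_right[where N=n]) (rule LamT_row)
    show "mneg phi n m = madd (mmul (mmul LamT LamT) (diagm \<gamma>)) (mmul LamT (diagm \<beta>)) n m"
    proof (cases "m < n")
      case True
      have "0 = phi n m * h m + Ent n m * h m" using Kx[of n m] psi0[of m n] True
        by (simp add: idm_def diagm_def)
      then have "phi n m = - Ent n m" using hnz[rule_format, of m]
        by (metis add.commute add_eq_0_iff2 distrib_right mult_eq_0_iff)
      then show ?thesis unfolding mneg_def madd_def a b using True
        by (simp add: Ent_e LamT2_entry LamT_entry)
    next
      case False
      then show ?thesis unfolding mneg_def madd_def a b using phi0[of n m]
        by (simp add: LamT2_entry LamT_entry)
    qed
  qed
  have G3: "mneg psi = mmul LamT (mmul (diagm (\<lambda>i. h (Suc i))) (diagm (\<lambda>i. inverse (h i))))"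
  proof (intro ext)
    fix i j
    show "mneg psi i j = mmul LamT (mmul (diagm (\<lambda>i. h (Suc i))) (diagm (\<lambda>i. inverse (h i)))) i j"
    proof (cases "j < i")
      case True
      have "0 = Ent j i * h i + h j * psi i j" using Kx[of j i] phi0[of j i] True
        by (simp add: idm_def diagm_def)
      then have "psi i j = - Ent j i * h i / h j" using hnz[rule_format, of j]
        by (simp add: field_simps)
      then show ?thesis unfolding mneg_def mmul_LamT_left diag_diag using True
        by (auto simp: Ent_e diagm_def field_simps)
    next
      case False
      then show ?thesis unfolding mneg_def mmul_LamT_left diag_diag using psi0[of i j]
        by (auto simp: diagm_def)
    qed
  qed
  show ?thesis using G1 G2 G3 unfolding phi_def psi_def by simp
qed



lemma theta_hd:
  assumes d: "(g has_derivative g') (at p)"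
  shows "theta g p = g' p"
proof -
  have lin: "linear g'" using d by (rule has_derivative_linear)
  have d1: "((\<lambda>t. g (t, snd p)) has_derivative (\<lambda>h. g' (h, 0))) (at (fst p))"
  proof -
    have "((\<lambda>t. (t, snd p)) has_derivative (\<lambda>h. (h, 0))) (at (fst p))"
      by (auto intro!: derivative_eq_intros)
    from has_derivative_compose[OF this] d show ?thesis by (cases p) auto
  qed
  have d2: "((\<lambda>t. g (fst p, t)) has_derivative (\<lambda>h. g' (0, h))) (at (snd p))"
  proof -
    have "((\<lambda>t. (fst p, t)) has_derivative (\<lambda>h. (0, h))) (at (snd p))"
      by (auto intro!: derivative_eq_intros)
    from has_derivative_compose[OF this] d show ?thesis by (cases p) auto
  qed
  define c1 where "c1 = g' (1, 0)"
  define c2 where "c2 = g' (0, 1)"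
  have s1: "g' (h, 0) = h * c1" for h
    using linear_scale[OF lin, of h "(1,0)"] by (simp add: c1_def)
  have s2: "g' (0, h) = h * c2" for h
    using linear_scale[OF lin, of h "(0,1)"] by (simp add: c2_def)
  have D1: "deriv (\<lambda>t. g (t, snd p)) (fst p) = c1"
    apply (rule DERIV_imp_deriv)
    using d1 unfolding has_field_derivative_def s1 by (simp add: mult.commute[of _ c1])
  have D2: "deriv (\<lambda>t. g (fst p, t)) (snd p) = c2"
    apply (rule DERIV_imp_deriv)
    using d2 unfolding has_field_derivative_def s2 by (simp add: mult.commute[of _ c2])
  have "g' p = g' (fst p, 0) + g' (0, snd p)"
    using linear_add[OF lin, of "(fst p, 0)" "(0, snd p)"] by simp
  then show ?thesis unfolding theta_def D1 D2 s1 s2 by simp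
qed

lemma theta_diff:
  assumes "g differentiable (at p)"
  shows "\<exists>g'. (g has_derivative g') (at p) \<and> theta g p = g' p"
  using assms theta_hd unfolding differentiable_def by blast

lemma theta_add:
  assumes "f differentiable (at p)" "g differentiable (at p)"
  shows "theta (\<lambda>q. f q + g q) p = theta f p + theta g p"
proof -
  obtain f' g' where "(f has_derivative f') (at p)" "(g has_derivative g') (at p)"
    using assms unfolding differentiable_def by blast
  then show ?thesis using theta_hd has_derivative_add by metis
qed

lemma theta_mult:
  assumes "f differentiable (at p)" "g differentiable (at p)"
  shows "theta (\<lambda>q. f q * g q) p = f p * theta g p + theta f p * g p"
proof -
  obtain f' g' where a: "(f has_derivative f') (at p)" "(g has_derivative g') (at p)"
    using assms unfolding differentiable_def by blast
  have "((\<lambda>q. f q * g q) has_derivative (\<lambda>h. f p * g' h + f' h * g p)) (at p)"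
    using has_derivative_mult[OF a] .
  then show ?thesis using theta_hd a by metis
qed

lemma theta_sum:
  assumes "finite A" "\<forall>i\<in>A. f i differentiable (at p)"
  shows "theta (\<lambda>q. \<Sum>i\<in>A. f i q) p = (\<Sum>i\<in>A. theta (f i) p)"
  using assms
proof (induction A rule: finite_induct)
  case empty
  have "((\<lambda>q. 0::real) has_derivative (\<lambda>h. 0)) (at p)" by simp
  then show ?case using theta_hd by fastforce
next
  case (insert x F)
  have "(\<lambda>q. \<Sum>i\<in>F. f i q) differentiable (at p)"
    using insert by (intro differentiable_sum) auto
  then show ?case using insert theta_add[of "f x" p "\<lambda>q. \<Sum>i\<in>F. f i q"] by simp
qed

lemma theta_cong:
  assumes U: "open U" "p \<in> U" and e: "\<forall>q\<in>U. f q = g q"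
  shows "theta f p = theta g p"
proof -
  have "open ((\<lambda>t. (t, snd p)) -` U)"
    by (rule open_vimage[OF U(1)]) (intro continuous_intros)
  then have o1: "open {t. (t, snd p) \<in> U}" by (simp add: vimage_def)
  have "open ((\<lambda>t. (fst p, t)) -` U)"
    by (rule open_vimage[OF U(1)]) (intro continuous_intros)
  then have o2: "open {t. (fst p, t) \<in> U}" by (simp add: vimage_def)
  have "eventually (\<lambda>t. (t, snd p) \<in> U) (nhds (fst p))"
    using eventually_nhds_in_open[OF o1, of "fst p"] U(2) by (cases p) auto
  then have 1: "eventually (\<lambda>t. f (t, snd p) = g (t, snd p)) (nhds (fst p))"
    by eventually_elim (use e in auto)
  have "eventually (\<lambda>t. (fst p, t) \<in> U) (nhds (snd p))"
    using eventually_nhds_in_open[OF o2, of "snd p"] U(2) by (cases p) auto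
  then have 2: "eventually (\<lambda>t. f (fst p, t) = g (fst p, t)) (nhds (snd p))"
    by eventually_elim (use e in auto)
  show ?thesis unfolding theta_def
    using deriv_cong_ev[OF 1 refl] deriv_cong_ev[OF 2 refl] by simp
qed

lemma diff_transfer:
  assumes U: "open U" "p \<in> U" and e: "\<forall>q\<in>U. f q = g q" and d: "g differentiable (at p)"
  shows "f differentiable (at p)"
proof -
  obtain g' where "(g has_derivative g') (at p)" using d unfolding differentiable_def by blast
  then have "(f has_derivative g') (at p)"
    by (rule has_derivative_transform_within_open[OF _ U]) (use e in auto)
  then show ?thesis unfolding differentiable_def by blast
qed

lemma theta_const_on:
  assumes U: "open U" "p \<in> U" and e: "\<forall>q\<in>U. f q = a"
  shows "theta f p = 0" and "f differentiable (at p)"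
proof -
  have "((\<lambda>q. a) has_derivative (\<lambda>h. 0)) (at p)" by simp
  then have "theta (\<lambda>q. a) p = 0" using theta_hd by fastforce
  then show "theta f p = 0" using theta_cong[OF U, of f "\<lambda>q. a"] e by simp
  show "f differentiable (at p)" by (rule diff_transfer[OF U e]) simp
qed

lemma ps_deriv:
  fixes b c :: "real list"
  assumes sK: "summable (\<lambda>k. real k ^ e * hgw b c K k)" and xK: "\<bar>x\<bar> < \<bar>K\<bar>"
    and sx: "summable (\<lambda>k. real k ^ Suc e * hgw b c x k)"
  shows "\<exists>D. ((\<lambda>t. \<Sum>k. real k ^ e * hgw b c t k) has_field_derivative D) (at x)
            \<and> x * D = (\<Sum>k. real k ^ Suc e * hgw b c x k)"
proof -
  define a where "a k = real k ^ e * ((\<Prod>y\<leftarrow>b. pochhammer y k) / (\<Prod>y\<leftarrow>c. pochhammer y k) / fact k)" for k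
  have hw: "real k ^ e * hgw b c t k = a k * t ^ k" for k t
    by (simp add: a_def hgw_def)
  have hw1: "real k ^ Suc e * hgw b c t k = real k * (a k * t ^ k)" for k t
    by (simp add: a_def hgw_def)
  have "summable (\<lambda>k. a k * K ^ k)" using sK by (simp add: hw)
  from termdiffs_strong[OF this, of x] xK
  have DD: "((\<lambda>t. \<Sum>k. a k * t ^ k) has_field_derivative (\<Sum>n. diffs a n * x ^ n)) (at x)" by simp
  define g where "g k = real k * (a k * x ^ k)" for k
  have ge: "(\<lambda>k. real k ^ Suc e * hgw b c x k) = g"
    by (rule ext) (simp only: g_def hw1)
  have gs: "g sums (\<Sum>k. real k ^ Suc e * hgw b c x k)"
    using summable_sums[OF sx] unfolding ge .
  have gS: "(\<lambda>n. g (Suc n)) sums (\<Sum>k. real k ^ Suc e * hgw b c x k)"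
    using gs by (subst sums_Suc_iff) (simp add: g_def)
  have xD: "x * (\<Sum>n. diffs a n * x ^ n) = (\<Sum>k. real k ^ Suc e * hgw b c x k)"
  proof (cases "x = 0")
    case True
    have "g = (\<lambda>k. 0)" by (auto simp: g_def True)
    with gs have "(\<Sum>k. real k ^ Suc e * hgw b c x k) = 0" using sums_unique sums_zero by metis
    then show ?thesis using True by simp
  next
    case False
    have "(\<lambda>n. g (Suc n) / x) sums ((\<Sum>k. real k ^ Suc e * hgw b c x k) / x)"
      using sums_divide[OF gS] .
    moreover have "(\<lambda>n. g (Suc n) / x) = (\<lambda>n. diffs a n * x ^ n)"
      using False by (auto simp: g_def diffs_def)
    ultimately have "(\<Sum>n. diffs a n * x ^ n) = (\<Sum>k. real k ^ Suc e * hgw b c x k) / x"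
      using sums_unique by metis
    then show ?thesis using False by simp
  qed
  show ?thesis using DD xD by (intro exI[of _ "\<Sum>n. diffs a n * x ^ n"]) (simp add: hw)
qed


lemma comp_fst:
  assumes "(F has_field_derivative D) (at (fst p))"
  shows "((\<lambda>q::real\<times>real. F (fst q)) has_derivative (\<lambda>h. D * fst h)) (at p)"
  using has_derivative_compose[OF has_derivative_fst[OF has_derivative_ident, of "at p"], of F "(*) D"]
    assms by (simp add: has_field_derivative_def)

lemma comp_snd:
  assumes "(F has_field_derivative D) (at (snd p))"
  shows "((\<lambda>q::real\<times>real. F (snd q)) has_derivative (\<lambda>h. D * snd h)) (at p)"
  using has_derivative_compose[OF has_derivative_snd[OF has_derivative_ident, of "at p"], of F "(*) D"]
    assms by (simp add: has_field_derivative_def)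

lemma bigger_point:
  fixes x :: real
  assumes "0 < r"
  shows "\<exists>K. \<bar>x\<bar> < \<bar>K\<bar> \<and> \<bar>K - x\<bar> < r"
proof (cases "x \<ge> 0")
  case True
  then show ?thesis using assms by (intro exI[of _ "x + r/2"]) auto
next
  case False
  then show ?thesis using assms by (intro exI[of _ "x - r/2"]) auto
qed

lemma moment_props:
  assumes U: "open U" "p \<in> U"
    and sm: "\<forall>p\<in>U. \<forall>j. summable (\<lambda>k. real k ^ j * hgw b1 c (fst p) k)
                   \<and> summable (\<lambda>k. real k ^ j * hgw b2 c (snd p) k)"
  shows "\<exists>g'. ((\<lambda>q. moment b1 b2 c q i j) has_derivative g') (at p)
           \<and> g' p = moment b1 b2 c p (Suc i) j"
proof -
  obtain r where r: "r > 0" "ball p r \<subseteq> U" using U open_contains_ball by blast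
  define e where "e = i + j div 2"
  show ?thesis
  proof (cases "even j")
    case True
    obtain K where K: "\<bar>fst p\<bar> < \<bar>K\<bar>" "\<bar>K - fst p\<bar> < r" using bigger_point[OF r(1)] by blast
    have "(K, snd p) \<in> ball p r" using K(2) by (cases p) (simp add: dist_Pair_Pair dist_real_def abs_minus_commute)
    then have KU: "(K, snd p) \<in> U" using r by blast
    obtain D where D: "((\<lambda>t. \<Sum>k. real k ^ e * hgw b1 c t k) has_field_derivative D) (at (fst p))"
      "fst p * D = (\<Sum>k. real k ^ Suc e * hgw b1 c (fst p) k)"
      using ps_deriv[of e b1 c K "fst p"] sm KU U(2) K(1) by fastforce
    have eq: "(\<lambda>q. moment b1 b2 c q i j) = (\<lambda>q. (\<lambda>t. \<Sum>k. real k ^ e * hgw b1 c t k) (fst q))"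
      using True by (auto simp: moment_def e_def)
    show ?thesis unfolding eq
      by (rule exI, rule conjI, rule comp_fst[OF D(1)])
         (use D(2) True in \<open>simp add: moment_def e_def mult.commute\<close>)
  next
    case False
    obtain K where K: "\<bar>snd p\<bar> < \<bar>K\<bar>" "\<bar>K - snd p\<bar> < r" using bigger_point[OF r(1)] by blast
    have "(fst p, K) \<in> ball p r" using K(2) by (cases p) (simp add: dist_Pair_Pair dist_real_def abs_minus_commute)
    then have KU: "(fst p, K) \<in> U" using r by blast
    obtain D where D: "((\<lambda>t. \<Sum>k. real k ^ e * hgw b2 c t k) has_field_derivative D) (at (snd p))"
      "snd p * D = (\<Sum>k. real k ^ Suc e * hgw b2 c (snd p) k)"
      using ps_deriv[of e b2 c K "snd p"] sm KU U(2) K(1) by fastforce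
    have eq: "(\<lambda>q. moment b1 b2 c q i j) = (\<lambda>q. (\<lambda>t. \<Sum>k. real k ^ e * hgw b2 c t k) (snd q))"
      using False by (auto simp: moment_def e_def)
    show ?thesis unfolding eq
      by (rule exI, rule conjI, rule comp_snd[OF D(1)])
         (use D(2) False in \<open>simp add: moment_def e_def mult.commute\<close>)
  qed
qed

lemma moment_diff:
  assumes U: "open U" "p \<in> U"
    and sm: "\<forall>p\<in>U. \<forall>j. summable (\<lambda>k. real k ^ j * hgw b1 c (fst p) k)
                   \<and> summable (\<lambda>k. real k ^ j * hgw b2 c (snd p) k)"
  shows "(\<lambda>q. moment b1 b2 c q i j) differentiable (at p)"
    and "theta (\<lambda>q. moment b1 b2 c q i j) p = moment b1 b2 c p (Suc i) j"
proof -
  obtain g' where g: "((\<lambda>q. moment b1 b2 c q i j) has_derivative g') (at p)"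
    "g' p = moment b1 b2 c p (Suc i) j" using moment_props[OF U sm, of i j] by blast
  show "(\<lambda>q. moment b1 b2 c q i j) differentiable (at p)" using g(1) unfolding differentiable_def by blast
  show "theta (\<lambda>q. moment b1 b2 c q i j) p = moment b1 b2 c p (Suc i) j"
    using theta_hd[OF g(1)] g(2) by simp
qed

lemma lead_minor_LDU:
  assumes L: "lower_unitri L" and U: "lower_unitri U"
    and M: "M = mmul (mmul L (diagm h)) (mtrans U)"
  shows "lead_minor M n = (\<Prod>i<n. h i)"
proof -
  define Lm where "Lm = Matrix.mat n n (\<lambda>(i,j). L i j)"
  define X where "X = Matrix.mat n n (\<lambda>(i,j). h i * U j i)"
  define Mm where "Mm = Matrix.mat n n (\<lambda>(i,j). M i j)"
  have Lc: "Lm \<in> carrier_mat n n" and Xc: "X \<in> carrier_mat n n" unfolding Lm_def X_def by auto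
  have "Mm = Lm * X"
  proof (rule eq_matI)
    fix i j assume i: "i < dim_row (Lm * X)" and j: "j < dim_col (Lm * X)"
    then have i': "i < n" and j': "j < n" using Lc Xc by auto
    have "(Lm * X) $$ (i,j) = (\<Sum>k = 0..<n. L i k * (h k * U j k))"
      using i' j' by (simp add: Lm_def X_def scalar_prod_def)
    also have "\<dots> = (\<Sum>k<n. L i k * h k * U j k)"
      by (simp add: atLeast0LessThan mult.assoc)
    also have "\<dots> = M i j"
      using LDU_entry[OF L M _ U, of i j "n - 1"] i' j'
      by (simp add: lessThan_Suc_atMost[symmetric])
    finally show "Mm $$ (i, j) = (Lm * X) $$ (i, j)" using i' j' by (simp add: Mm_def)
  qed (use Lc Xc in \<open>auto simp: Mm_def\<close>)
  then have "Determinant.det Mm = Determinant.det Lm * Determinant.det X"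
    using det_mult[OF Lc Xc] by simp
  moreover have "Determinant.det Lm = 1"
  proof -
    have "Determinant.det Lm = prod_list (diag_mat Lm)"
      by (rule det_lower_triangular[OF _ Lc]) (auto simp: Lm_def lu_zero[OF L])
    also have "\<dots> = (\<Prod>i<n. 1)"
      by (simp add: diag_mat_def Lm_def lu_one[OF L] prod.distinct_set_conv_list[symmetric]
            atLeast0LessThan cong: map_cong)
    also have "\<dots> = 1" by simp
    finally show ?thesis .
  qed
  moreover have "Determinant.det X = (\<Prod>i<n. h i)"
  proof -
    have "Determinant.det X = prod_list (diag_mat X)"
      by (rule det_upper_triangular[OF _ Xc]) (auto simp: X_def upper_triangular_def lu_zero[OF U])
    also have "\<dots> = (\<Prod>i<n. h i)"
      by (simp add: diag_mat_def X_def lu_one[OF U] prod.distinct_set_conv_list[symmetric]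
            atLeast0LessThan cong: map_cong)
    finally show ?thesis .
  qed
  moreover have "lead_minor M n = Determinant.det Mm"
    unfolding lead_minor_def Determinant.det_def
    by (auto simp: Mm_def atLeast0LessThan permutes_in_image intro!: sum.cong prod.cong)
  ultimately show ?thesis by simp
qed


theorem mainTheorem16:
  fixes b1 b2 c :: "real list" and U :: "(real \<times> real) set"
    and S St :: "real \<times> real \<Rightarrow> imat"
    and H \<alpha> \<beta> \<gamma> :: "real \<times> real \<Rightarrow> nat \<Rightarrow> real"
  assumes "open U"
    and "\<forall>x\<in>set c. \<forall>m::nat. x \<noteq> - real m"
    and "\<forall>p\<in>U. \<forall>j. summable (\<lambda>k. real k ^ j * hgw b1 c (fst p) k)
                   \<and> summable (\<lambda>k. real k ^ j * hgw b2 c (snd p) k)"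
    and "\<forall>p\<in>U. \<forall>n. lead_minor (moment b1 b2 c p) n \<noteq> 0"
    and "\<forall>p\<in>U. lower_unitri (S p) \<and> lower_unitri (St p) \<and>
           moment b1 b2 c p = mmul (mmul (lt_inv (S p)) (diagm (H p))) (mtrans (lt_inv (St p)))"
    and "\<forall>p\<in>U. mmul (mmul (S p) Lam) (lt_inv (S p)) =
           madd (madd (madd (mmul (mmul LamT LamT) (diagm (\<gamma> p))) (mmul LamT (diagm (\<beta> p))))
                      (diagm (\<alpha> p))) Lam"
  shows "\<forall>p\<in>U.
     mmul (diagm (\<lambda>i. theta (\<lambda>q. H q i) p)) (diagm (\<lambda>i. inverse (H p i))) = diagm (\<alpha> p)
   \<and> mneg (phi S p) = madd (mmul (mmul LamT LamT) (diagm (\<gamma> p))) (mmul LamT (diagm (\<beta> p)))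
   \<and> mneg (phi St p) = mmul LamT (mmul (diagm (\<lambda>i. H p (Suc i))) (diagm (\<lambda>i. inverse (H p i))))"
proof
  fix p assume pU: "p \<in> U"
  note oU = assms(1)
  note sm = assms(3)
  define L where "L q = lt_inv (S q)" for q
  define Ut where "Ut q = lt_inv (St q)" for q
  define M where "M q = moment b1 b2 c q" for q
  have luS: "lower_unitri (S q)" and luSt: "lower_unitri (St q)"
    and MLDU: "M q = mmul (mmul (L q) (diagm (H q))) (mtrans (Ut q))" if "q \<in> U" for q
    using assms(5) that by (auto simp: M_def L_def Ut_def)
  have luL: "lower_unitri (L q)" and SL: "mmul (S q) (L q) = idm" if "q \<in> U" for q
    using lt_inv_prop[OF luS[OF that]] by (auto simp: L_def)
  have luU: "lower_unitri (Ut q)" and StU: "mmul (St q) (Ut q) = idm" if "q \<in> U" for q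
    using lt_inv_prop[OF luSt[OF that]] by (auto simp: Ut_def)
  have Hnz: "H q k \<noteq> 0" if "q \<in> U" for q k
  proof -
    have "lead_minor (M q) (Suc k) = (\<Prod>i<Suc k. H q i)"
      by (rule lead_minor_LDU[OF luL[OF that] luU[OF that] MLDU[OF that]])
    moreover have "lead_minor (M q) (Suc k) \<noteq> 0" using assms(4) that by (simp add: M_def)
    ultimately show ?thesis by simp
  qed
  have Mdiff: "(\<lambda>q. M q i j) differentiable (at p)" for i j
    unfolding M_def by (rule moment_diff(1)[OF oU pU sm])
  have Mtheta: "theta (\<lambda>q. M q i j) p = M p (Suc i) j" for i j
    unfolding M_def by (rule moment_diff(2)[OF oU pU sm])
  have dLU: "(\<lambda>q. H q n) differentiable (at p) \<and>
      (\<forall>i. (\<lambda>q. L q i n) differentiable (at p) \<and> (\<lambda>q. Ut q i n) differentiable (at p))" for n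
  proof (induction n rule: less_induct)
    case (less n)
    have sd: "(\<lambda>q. \<Sum>k<n. L q i k * H q k * Ut q j k) differentiable (at p)" for i j
      using less by (intro differentiable_sum ballI differentiable_mult) auto
    have Hd: "(\<lambda>q. H q n) differentiable (at p)"
    proof (rule diff_transfer[OF oU pU])
      show "\<forall>q\<in>U. H q n = M q n n - (\<Sum>k<n. L q n k * H q k * Ut q n k)"
        using LDU_rec(1)[OF luL luU MLDU, of _ n n] lu_one[OF luL] by fastforce
      show "(\<lambda>q. M q n n - (\<Sum>k<n. L q n k * H q k * Ut q n k)) differentiable (at p)"
        using Mdiff sd by (intro differentiable_diff) auto
    qed
    have Ld: "(\<lambda>q. L q i n) differentiable (at p)" for i
    proof (cases "i \<le> n")
      case True
      then show ?thesis
        by (intro theta_const_on(2)[OF oU pU, of _ "if i = n then 1 else 0"])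
           (auto simp: lu_zero[OF luL] lu_one[OF luL])
    next
      case False
      show ?thesis
      proof (rule diff_transfer[OF oU pU])
        show "\<forall>q\<in>U. L q i n = (M q i n - (\<Sum>k<n. L q i k * H q k * Ut q n k)) / H q n"
          using LDU_rec(1)[OF luL luU MLDU, of _ n i] False Hnz
          by (auto simp: field_simps)
        show "(\<lambda>q. (M q i n - (\<Sum>k<n. L q i k * H q k * Ut q n k)) / H q n) differentiable (at p)"
          using Mdiff sd Hd Hnz[OF pU] by (intro differentiable_divide differentiable_diff) auto
      qed
    qed
    have Ud: "(\<lambda>q. Ut q i n) differentiable (at p)" for i
    proof (cases "i \<le> n")
      case True
      then show ?thesis
        by (intro theta_const_on(2)[OF oU pU, of _ "if i = n then 1 else 0"])
           (auto simp: lu_zero[OF luU] lu_one[OF luU])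
    next
      case False
      show ?thesis
      proof (rule diff_transfer[OF oU pU])
        show "\<forall>q\<in>U. Ut q i n = (M q n i - (\<Sum>k<n. L q n k * H q k * Ut q i k)) / H q n"
          using LDU_rec(2)[OF luL luU MLDU, of _ n i] False Hnz
          by (auto simp: field_simps)
        show "(\<lambda>q. (M q n i - (\<Sum>k<n. L q n k * H q k * Ut q i k)) / H q n) differentiable (at p)"
          using Mdiff sd Hd Hnz[OF pU] by (intro differentiable_divide differentiable_diff) auto
      qed
    qed
    show ?case using Hd Ld Ud by blast
  qed
  have Sd: "(\<lambda>q. S q i j) differentiable (at p)" for i j
  proof (induction "i - j" arbitrary: j rule: less_induct)
    case less
    show ?case
    proof (cases "i \<le> j")
      case True
      then show ?thesis
        by (intro theta_const_on(2)[OF oU pU, of _ "if i = j then 1 else 0"])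
           (auto simp: lu_zero[OF luS] lu_one[OF luS])
    next
      case False
      show ?thesis
      proof (rule diff_transfer[OF oU pU])
        show "\<forall>q\<in>U. S q i j = - (\<Sum>k\<in>{j<..i}. S q i k * L q k j)"
          using lower_left_inv_formula[OF luS luL SL] False by auto
        show "(\<lambda>q. - (\<Sum>k\<in>{j<..i}. S q i k * L q k j)) differentiable (at p)"
          using less dLU False by (intro differentiable_minus differentiable_sum ballI differentiable_mult) auto
      qed
    qed
  qed
  have Std: "(\<lambda>q. St q i j) differentiable (at p)" for i j
  proof (induction "i - j" arbitrary: j rule: less_induct)
    case less
    show ?case
    proof (cases "i \<le> j")
      case True
      then show ?thesis
        by (intro theta_const_on(2)[OF oU pU, of _ "if i = j then 1 else 0"])
           (auto simp: lu_zero[OF luSt] lu_one[OF luSt])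
    next
      case False
      show ?thesis
      proof (rule diff_transfer[OF oU pU])
        show "\<forall>q\<in>U. St q i j = - (\<Sum>k\<in>{j<..i}. St q i k * Ut q k j)"
          using lower_left_inv_formula[OF luSt luU StU] False by auto
        show "(\<lambda>q. - (\<Sum>k\<in>{j<..i}. St q i k * Ut q k j)) differentiable (at p)"
          using less dLU False by (intro differentiable_minus differentiable_sum ballI differentiable_mult) auto
      qed
    qed
  qed
  have dS0: "\<forall>n a. n \<le> a \<longrightarrow> mtheta S p n a = 0"
  proof (intro allI impI)
    fix n a :: nat assume na: "n \<le> a"
    show "mtheta S p n a = 0" unfolding mtheta_def
      by (rule theta_const_on(1)[OF oU pU, of _ "if a = n then 1 else 0"])
         (use na in \<open>auto simp: lu_zero[OF luS] lu_one[OF luS]\<close>)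
  qed
  have dSt0: "\<forall>n a. n \<le> a \<longrightarrow> mtheta St p n a = 0"
  proof (intro allI impI)
    fix n a :: nat assume na: "n \<le> a"
    show "mtheta St p n a = 0" unfolding mtheta_def
      by (rule theta_const_on(1)[OF oU pU, of _ "if a = n then 1 else 0"])
         (use na in \<open>auto simp: lu_zero[OF luSt] lu_one[OF luSt]\<close>)
  qed
  have K: "\<forall>n m. theta (\<lambda>q. H q n) p * idm n m = (\<Sum>a\<le>n. \<Sum>b\<le>m. mtheta S p n a * M p a b * St p m b
              + S p n a * M p (Suc a) b * St p m b + S p n a * M p a b * mtheta St p m b)"
  proof (intro allI)
    fix n m
    have idq: "\<forall>q\<in>U. H q n * idm n m = (\<Sum>a\<le>n. \<Sum>b\<le>m. S q n a * M q a b * St q m b)"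
    proof
      fix q assume q: "q \<in> U"
      have "(\<Sum>a\<le>n. \<Sum>b\<le>m. S q n a * M q a b * St q m b) = (\<Sum>a\<le>n. S q n a * (\<Sum>b\<le>m. M q a b * St q m b))"
        by (simp add: sum_distrib_left mult.assoc)
      also have "\<dots> = (\<Sum>a\<le>n. S q n a * L q a m) * H q m"
        by (simp add: P1[OF luL[OF q] luU[OF q] luSt[OF q] MLDU[OF q] StU[OF q]] sum_distrib_right mult.assoc)
      also have "\<dots> = idm n m * H q m" using SL[OF q] mmul_lu[OF luS[OF q], of "L q" n m] by simp
      also have "\<dots> = H q n * idm n m" by (simp add: idm_def diagm_def)
      finally show "H q n * idm n m = (\<Sum>a\<le>n. \<Sum>b\<le>m. S q n a * M q a b * St q m b)" ..
    qed
    have c0: "theta (\<lambda>q. idm n m) p = 0"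
      by (rule theta_const_on(1)[OF oU pU, of _ "idm n m"]) simp
    have "theta (\<lambda>q. H q n) p * idm n m = theta (\<lambda>q. H q n * idm n m) p"
      using theta_mult[of "\<lambda>q. H q n" p "\<lambda>q. idm n m"] dLU c0 by simp
    also have "\<dots> = theta (\<lambda>q. \<Sum>a\<le>n. \<Sum>b\<le>m. S q n a * M q a b * St q m b) p"
      by (rule theta_cong[OF oU pU idq])
    also have "\<dots> = (\<Sum>a\<le>n. \<Sum>b\<le>m. theta (\<lambda>q. S q n a * M q a b * St q m b) p)"
      using Sd Mdiff Std
      by (simp add: theta_sum differentiable_sum differentiable_mult)
    also have "\<dots> = (\<Sum>a\<le>n. \<Sum>b\<le>m. mtheta S p n a * M p a b * St p m b
              + S p n a * M p (Suc a) b * St p m b + S p n a * M p a b * mtheta St p m b)"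
    proof (intro sum.cong refl)
      fix a b
      have "theta (\<lambda>q. S q n a * M q a b * St q m b) p
          = (S p n a * M p a b) * theta (\<lambda>q. St q m b) p + theta (\<lambda>q. S q n a * M q a b) p * St p m b"
        using theta_mult[of "\<lambda>q. S q n a * M q a b" p "\<lambda>q. St q m b"] Sd Mdiff Std
        by (simp add: differentiable_mult)
      also have "theta (\<lambda>q. S q n a * M q a b) p = S p n a * M p (Suc a) b + theta (\<lambda>q. S q n a) p * M p a b"
        using theta_mult[of "\<lambda>q. S q n a" p "\<lambda>q. M q a b"] Sd Mdiff Mtheta by simp
      finally show "theta (\<lambda>q. S q n a * M q a b * St q m b) p = mtheta S p n a * M p a b * St p m b
              + S p n a * M p (Suc a) b * St p m b + S p n a * M p a b * mtheta St p m b"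
        by (simp add: mtheta_def algebra_simps)
    qed
    finally show "theta (\<lambda>q. H q n) p * idm n m = (\<Sum>a\<le>n. \<Sum>b\<le>m. mtheta S p n a * M p a b * St p m b
              + S p n a * M p (Suc a) b * St p m b + S p n a * M p a b * mtheta St p m b)" .
  qed
  have Ep: "mmul (mmul (S p) Lam) (L p) =
           madd (madd (madd (mmul (mmul LamT LamT) (diagm (\<gamma> p))) (mmul LamT (diagm (\<beta> p))))
                      (diagm (\<alpha> p))) Lam"
    using assms(6) pU by (simp add: L_def)
  have R: "mmul (diagm (\<lambda>i. theta (\<lambda>q. H q i) p)) (diagm (\<lambda>i. inverse (H p i))) = diagm (\<alpha> p)
   \<and> mneg (mmul (mtheta S p) (L p)) = madd (mmul (mmul LamT LamT) (diagm (\<gamma> p))) (mmul LamT (diagm (\<beta> p)))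
   \<and> mneg (mmul (mtheta St p) (Ut p)) = mmul LamT (mmul (diagm (\<lambda>i. H p (Suc i))) (diagm (\<lambda>i. inverse (H p i))))"
    by (rule final_algebra[OF luS[OF pU] luL[OF pU] luSt[OF pU] luU[OF pU] SL[OF pU] StU[OF pU]
          MLDU[OF pU] _ dS0 dSt0 K Ep]) (use Hnz[OF pU] in blast)
  then show "mmul (diagm (\<lambda>i. theta (\<lambda>q. H q i) p)) (diagm (\<lambda>i. inverse (H p i))) = diagm (\<alpha> p)
   \<and> mneg (phi S p) = madd (mmul (mmul LamT LamT) (diagm (\<gamma> p))) (mmul LamT (diagm (\<beta> p)))
   \<and> mneg (phi St p) = mmul LamT (mmul (diagm (\<lambda>i. H p (Suc i))) (diagm (\<lambda>i. inverse (H p i))))"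
    by (simp add: phi_def L_def Ut_def)
qed

end
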